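(* Let $f=(f_V,\{f_{l,v}\}_{v\in V})\colon \mathcal{G}\to \mathcal{G}'$ be a moment graph morphism and let $\xi=\{\xi_v\}_{v\in V}$ be a $\mathcal{G}$-monodromy such that if $v - w\in E$ and $f_V(v)\neq f_V(w)$, then $\xi_v(l'(f_E(v - w)))\in l(v - w)\mathbb{Z}$. Then there is a ring homomorphism between structure algebras \[ f^{\xi\ast}\colon \mathcal{Z}(\mathcal{G}') \to \mathcal{Z}(\mathcal{G}), \quad (z_{v'})_{v'\in V'}\mapsto (\xi_v(z_{f_V(v)}))_{v\in V}, \] called the pull-back map induced by $f$ and twisted by $\xi$.
   Context: A moment graph on a lattice $\Lambda$ is $\mathcal{G}=\big((V,\le), l\colon E\to \Lambda\setminus\{0\}\big)$ with $(V,\le)$ a poset, $E\subset V\times V$ a set of directed edges $v\to w$ labelled by $l(v\to w)\neq 0$, and $v\le w$, $v\ne w$ for every edge $v\to w$; $v - w$ denotes the underlying unoriented edge. A morphism $f\colon\mathcal{G}\to\mathcal{G}'=\big((V',\le'),l'\colon E'\to\Lambda\setminus\{0\}\big)$ consists of a poset map $f_V\colon V\to V'$ such that for each edge $v - w\in E$ either $f_V(v)=f_V(w)$ or $f_V(v) - f_V(w)\in E'$ (in the latter case set $f_E(v - w):=f_V(v) - f_V(w)$), and $\mathbb{Z}$-linear automorphisms $f_{l,v}$ of $\Lambda$ such that for each edge $v - w$ with $f_V(v)\ne f_V(w)$: $f_{l,v}(l(v - w))=\pm l'(f_E(v - w))$ and $f_{l,v}\equiv f_{l,w}$ modulo $l'(f_E(v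 - w))\mathbb{Z}$. A $\mathcal{G}$-monodromy is a collection $\{\xi_v\}_{v\in V}$ of automorphisms of $\Lambda$ with $\xi_v(\lambda)-\xi_w(\lambda)\in l(v\to w)\mathbb{Z}$ for all $v\to w\in E$, $\lambda\in\Lambda$; automorphisms of $\Lambda$ are extended to the ring $S$. For $S=\mathbb{Z}[\Lambda]$ (with $x_\lambda=1-e^{-\lambda}$) or $S=S^*(\Lambda)$ (with $x_\lambda=\lambda$), the structure algebra is $\mathcal{Z}(\mathcal{G})=\{(z_v)_v\in\prod_{v\in V}S\mid z_v-z_w\in x_{l(v\to w)}S\ \forall v\to w\in E\}$ with coordinatewise multiplication. *)

theory Defs
  imports "HOL-Analysis.Finite_Cartesian_Product" "HOL-Library.Poly_Mapping"
begin

type_synonym 'n lat = "int ^ 'n"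

text \<open>Group ring Z[Lambda] (finitely supported functions Lambda -> Z with convolution)
  and symmetric algebra S*(Lambda) = Z[t_i | i in 'n] (monomials 'n =>0 nat).\<close>
type_synonym 'n grp_ring = "('n lat) \<Rightarrow>\<^sub>0 int"
type_synonym 'n sym_alg = "('n \<Rightarrow>\<^sub>0 nat) \<Rightarrow>\<^sub>0 int"

definition lat_aut :: "('n::finite lat \<Rightarrow> 'n lat) \<Rightarrow> bool" where
  "lat_aut \<phi> \<longleftrightarrow> bij \<phi> \<and> (\<forall>a b. \<phi> (a + b) = \<phi> a + \<phi> b)"

definition lat_mult :: "'n::finite lat \<Rightarrow> 'n lat \<Rightarrow> bool" where
  "lat_mult a l \<longleftrightarrow> (\<exists>k::int. a = k *s l)"

definition x_grp :: "'n::finite lat \<Rightarrow> 'n grp_ring" where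
  "x_grp a = 1 - Poly_Mapping.single (- a) 1"

definition sym_lin :: "'n::finite lat \<Rightarrow> 'n sym_alg" where
  "sym_lin a = (\<Sum>i\<in>UNIV. Poly_Mapping.single (Poly_Mapping.single i 1) (a $ i))"

definition x_sym :: "'n::finite lat \<Rightarrow> 'n sym_alg" where
  "x_sym a = sym_lin a"

definition grp_act :: "('n::finite lat \<Rightarrow> 'n lat) \<Rightarrow> 'n grp_ring \<Rightarrow> 'n grp_ring" where
  "grp_act \<phi> p = (\<Sum>\<mu>\<in>Poly_Mapping.keys p. Poly_Mapping.single (\<phi> \<mu>) (Poly_Mapping.lookup p \<mu>))"

definition mon_act :: "('n::finite lat \<Rightarrow> 'n lat) \<Rightarrow> ('n \<Rightarrow>\<^sub>0 nat) \<Rightarrow> 'n sym_alg" where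
  "mon_act \<phi> m = (\<Prod>i\<in>Poly_Mapping.keys m. sym_lin (\<phi> (axis i 1)) ^ Poly_Mapping.lookup m i)"

definition sym_act :: "('n::finite lat \<Rightarrow> 'n lat) \<Rightarrow> 'n sym_alg \<Rightarrow> 'n sym_alg" where
  "sym_act \<phi> p = (\<Sum>m\<in>Poly_Mapping.keys p. Poly_Mapping.single 0 (Poly_Mapping.lookup p m) * mon_act \<phi> m)"

definition moment_graph ::
  "'v set \<Rightarrow> ('v \<times> 'v) set \<Rightarrow> ('v \<times> 'v) set \<Rightarrow> ('v \<times> 'v \<Rightarrow> 'n::finite lat) \<Rightarrow> bool" where
  "moment_graph V le E l \<longleftrightarrow> partial_order_on V le \<and> E \<subseteq> V \<times> V \<and>
     (\<forall>(v, w)\<in>E. l (v, w) \<noteq> 0 \<and> (v, w) \<in> le \<and> v \<noteq> w)"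

definition uedge :: "('v \<times> 'v) set \<Rightarrow> 'v \<Rightarrow> 'v \<Rightarrow> bool" where
  "uedge E v w \<longleftrightarrow> (v, w) \<in> E \<or> (w, v) \<in> E"

definition ulab :: "('v \<times> 'v) set \<Rightarrow> ('v \<times> 'v \<Rightarrow> 'n lat) \<Rightarrow> 'v \<Rightarrow> 'v \<Rightarrow> 'n lat" where
  "ulab E l v w = (if (v, w) \<in> E then l (v, w) else l (w, v))"

definition mg_morphism ::
  "'v set \<Rightarrow> ('v \<times> 'v) set \<Rightarrow> ('v \<times> 'v) set \<Rightarrow> ('v \<times> 'v \<Rightarrow> 'n::finite lat) \<Rightarrow>
   'u set \<Rightarrow> ('u \<times> 'u) set \<Rightarrow> ('u \<times> 'u) set \<Rightarrow> ('u \<times> 'u \<Rightarrow> 'n lat) \<Rightarrow>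
   ('v \<Rightarrow> 'u) \<Rightarrow> ('v \<Rightarrow> 'n lat \<Rightarrow> 'n lat) \<Rightarrow> bool" where
  "mg_morphism V le E l V' le' E' l' fV fl \<longleftrightarrow>
     (\<forall>v\<in>V. fV v \<in> V') \<and>
     (\<forall>v\<in>V. \<forall>w\<in>V. (v, w) \<in> le \<longrightarrow> (fV v, fV w) \<in> le') \<and>
     (\<forall>v\<in>V. lat_aut (fl v)) \<and>
     (\<forall>(v, w)\<in>E. fV v = fV w \<or> uedge E' (fV v) (fV w)) \<and>
     (\<forall>(v, w)\<in>E. fV v \<noteq> fV w \<longrightarrow>
        (fl v (l (v, w)) = ulab E' l' (fV v) (fV w) \<or>
         fl v (l (v, w)) = - ulab E' l' (fV v) (fV w)) \<and>
        (\<forall>a. lat_mult (fl v a - fl w a) (ulab E' l' (fV v) (fV w))))"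

definition monodromy ::
  "'v set \<Rightarrow> ('v \<times> 'v) set \<Rightarrow> ('v \<times> 'v \<Rightarrow> 'n::finite lat) \<Rightarrow> ('v \<Rightarrow> 'n lat \<Rightarrow> 'n lat) \<Rightarrow> bool" where
  "monodromy V E l \<xi> \<longleftrightarrow> (\<forall>v\<in>V. lat_aut (\<xi> v)) \<and>
     (\<forall>(v, w)\<in>E. \<forall>a. lat_mult (\<xi> v a - \<xi> w a) (l (v, w)))"

text \<open>Structure algebra: elements of prod_{v in V} S, represented as functions vanishing off V.\<close>
definition struct_alg ::
  "('n::finite lat \<Rightarrow> 's::comm_ring_1) \<Rightarrow> 'v set \<Rightarrow> ('v \<times> 'v) set \<Rightarrow> ('v \<times> 'v \<Rightarrow> 'n lat) \<Rightarrow> ('v \<Rightarrow> 's) set" where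
  "struct_alg x V E l = {z. (\<forall>v. v \<notin> V \<longrightarrow> z v = 0) \<and> (\<forall>(v, w)\<in>E. x (l (v, w)) dvd (z v - z w))}"

definition pullback ::
  "(('n lat \<Rightarrow> 'n lat) \<Rightarrow> 's \<Rightarrow> 's) \<Rightarrow> ('v \<Rightarrow> 'n lat \<Rightarrow> 'n lat) \<Rightarrow> ('v \<Rightarrow> 'u) \<Rightarrow> 'v set \<Rightarrow> ('u \<Rightarrow> 's::zero) \<Rightarrow> ('v \<Rightarrow> 's)" where
  "pullback act \<xi> fV V z = (\<lambda>v. if v \<in> V then act (\<xi> v) (z (fV v)) else 0)"

definition is_ring_hom_between ::
  "('n::finite lat \<Rightarrow> 's::comm_ring_1) \<Rightarrow> 'v set \<Rightarrow> ('v \<times> 'v) set \<Rightarrow> ('v \<times> 'v \<Rightarrow> 'n lat) \<Rightarrow>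
   'u set \<Rightarrow> ('u \<times> 'u) set \<Rightarrow> ('u \<times> 'u \<Rightarrow> 'n lat) \<Rightarrow> (('u \<Rightarrow> 's) \<Rightarrow> ('v \<Rightarrow> 's)) \<Rightarrow> bool" where
  "is_ring_hom_between x V E l V' E' l' F \<longleftrightarrow>
     (\<forall>z\<in>struct_alg x V' E' l'. F z \<in> struct_alg x V E l) \<and>
     F (\<lambda>u. if u \<in> V' then 1 else 0) = (\<lambda>v. if v \<in> V then 1 else 0) \<and>
     (\<forall>z\<in>struct_alg x V' E' l'. \<forall>z'\<in>struct_alg x V' E' l'.
        F (\<lambda>u. z u + z' u) = (\<lambda>v. F z v + F z' v) \<and>
        F (\<lambda>u. z u * z' u) = (\<lambda>v. F z v * F z' v))"

end

theory Submission
  imports Defs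
begin


lemma pm_expand: "p = (\<Sum>k\<in>Poly_Mapping.keys p. Poly_Mapping.single k (Poly_Mapping.lookup p k))"
proof (rule poly_mapping_eqI)
  fix k'
  show "Poly_Mapping.lookup p k' = Poly_Mapping.lookup (\<Sum>k\<in>Poly_Mapping.keys p. Poly_Mapping.single k (Poly_Mapping.lookup p k)) k'"
    by (simp add: lookup_sum lookup_single when_def in_keys_iff)
qed

lemma addhom_zero:
  fixes F :: "'a::ab_group_add \<Rightarrow> 'b::ab_group_add"
  assumes "\<And>p q. F (p + q) = F p + F q"
  shows "F 0 = 0"
proof -
  have "F 0 + F 0 = F 0 + 0" using assms[of 0 0] by simp
  then show ?thesis by (rule add_left_imp_eq)
qed

lemma addhom_neg:
  fixes F :: "'a::ab_group_add \<Rightarrow> 'b::ab_group_add"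
  assumes "\<And>p q. F (p + q) = F p + F q"
  shows "F (- p) = - F p"
  using assms[of p "-p"] addhom_zero[of F, OF assms] by (simp add: eq_neg_iff_add_eq_0 add.commute)

lemma addhom_diff:
  fixes F :: "'a::ab_group_add \<Rightarrow> 'b::ab_group_add"
  assumes "\<And>p q. F (p + q) = F p + F q"
  shows "F (p - q) = F p - F q"
  using assms[of "p - q" q] by (simp add: algebra_simps)

lemma addhom_sum:
  fixes F :: "'a::ab_group_add \<Rightarrow> 'b::ab_group_add"
  assumes "\<And>p q. F (p + q) = F p + F q"
  shows "F (sum g I) = (\<Sum>i\<in>I. F (g i))"
proof (induction I rule: infinite_finite_induct)
  case (infinite A) then show ?case using addhom_zero[of F, OF assms] by simp
next
  case empty then show ?case using addhom_zero[of F, OF assms] by simp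
next
  case (insert x F') then show ?case by (simp add: assms)
qed

lemma addhom_mult:
  fixes F :: "('k::monoid_add \<Rightarrow>\<^sub>0 'c::ring) \<Rightarrow> 'r::comm_ring"
  assumes add: "\<And>p q. F (p + q) = F p + F q"
    and sing: "\<And>a b c d. F (Poly_Mapping.single a c * Poly_Mapping.single b d)
       = F (Poly_Mapping.single a c) * F (Poly_Mapping.single b d)"
  shows "F (p * q) = F p * F q"
proof -
  have "p * q = (\<Sum>a\<in>Poly_Mapping.keys p. Poly_Mapping.single a (Poly_Mapping.lookup p a)) *
     (\<Sum>b\<in>Poly_Mapping.keys q. Poly_Mapping.single b (Poly_Mapping.lookup q b))"
    using pm_expand[of p] pm_expand[of q] by simp
  also have "\<dots> = (\<Sum>a\<in>Poly_Mapping.keys p. \<Sum>b\<in>Poly_Mapping.keys q.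
      Poly_Mapping.single a (Poly_Mapping.lookup p a) * Poly_Mapping.single b (Poly_Mapping.lookup q b))"
    by (simp add: sum_product)
  finally have "F (p * q) = (\<Sum>a\<in>Poly_Mapping.keys p. \<Sum>b\<in>Poly_Mapping.keys q.
      F (Poly_Mapping.single a (Poly_Mapping.lookup p a)) * F (Poly_Mapping.single b (Poly_Mapping.lookup q b)))"
    by (simp add: addhom_sum[of F, OF add] sing)
  also have "\<dots> = (\<Sum>a\<in>Poly_Mapping.keys p. F (Poly_Mapping.single a (Poly_Mapping.lookup p a))) *
      (\<Sum>b\<in>Poly_Mapping.keys q. F (Poly_Mapping.single b (Poly_Mapping.lookup q b)))"
    by (simp add: sum_product)
  also have "\<dots> = F p * F q"
    using pm_expand[of p] pm_expand[of q] addhom_sum[of F, OF add] by metis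
  finally show ?thesis .
qed

lemma addhom_dvd:
  fixes F :: "('k \<Rightarrow>\<^sub>0 'c::ab_group_add) \<Rightarrow> 'r::comm_ring_1"
  assumes add: "\<And>p q. F (p + q) = F p + F q"
    and sing: "\<And>a c. d dvd F (Poly_Mapping.single a c)"
  shows "d dvd F p"
  by (subst pm_expand[of p]) (simp add: addhom_sum[of F, OF add] sing dvd_sum)

lemma dvd_prod_diff:
  fixes L :: "'r::comm_ring_1"
  assumes "\<And>i. i \<in> I \<Longrightarrow> L dvd a i - b i"
  shows "L dvd (\<Prod>i\<in>I. a i ^ n i) - (\<Prod>i\<in>I. b i ^ n i)"
proof -
  have mul: "L dvd x * y - u * w" if "L dvd x - u" "L dvd y - w" for x y u w :: 'r
  proof -
    have "x * y - u * w = x * (y - w) + (x - u) * w" by (simp add: algebra_simps)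
    then show ?thesis using that by simp
  qed
  have pw: "L dvd x ^ k - u ^ k" if "L dvd x - u" for x u :: 'r and k
    by (induction k) (simp_all add: mul that)
  show ?thesis using assms
  proof (induction I rule: infinite_finite_induct)
    case (insert x F) then show ?case by (simp add: mul pw)
  qed simp_all
qed



definition additive :: "('n::finite lat \<Rightarrow> 'n lat) \<Rightarrow> bool" where
  "additive \<phi> \<longleftrightarrow> (\<forall>a b. \<phi> (a + b) = \<phi> a + \<phi> b)"

lemma lat_aut_additive: "lat_aut \<phi> \<Longrightarrow> additive \<phi>"
  by (simp add: lat_aut_def additive_def)

lemma additive_smult:
  assumes "additive \<phi>"
  shows "\<phi> (k *s x) = k *s \<phi> x"
proof -
  have add: "\<And>a b. \<phi> (a + b) = \<phi> a + \<phi> b" using assms by (simp add: additive_def)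
  have nat: "\<phi> (int n *s x) = int n *s \<phi> x" for n
  proof (induction n)
    case 0 then show ?case using addhom_zero[of \<phi>, OF add] by simp
  next
    case (Suc n)
    have "int (Suc n) *s x = int n *s x + x" by (simp add: vector_sadd_rdistrib)
    moreover have "int (Suc n) *s \<phi> x = int n *s \<phi> x + \<phi> x" by (simp add: vector_sadd_rdistrib)
    ultimately show ?case using Suc add by simp
  qed
  show ?thesis
  proof (cases "k \<ge> 0")
    case True then show ?thesis using nat[of "nat k"] by simp
  next
    case False
    then obtain n where k: "k = - int n" by (metis nonneg_int_cases neg_0_le_iff_le linear minus_minus)
    show ?thesis unfolding k vector_smult_lneg addhom_neg[of \<phi>, OF add] nat ..
  qed
qed

lemma additive_lin:
  assumes "additive \<phi>"
  shows "\<phi> L = (\<Sum>i\<in>UNIV. (L $ i) *s \<phi> (axis i 1))"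
proof -
  have add: "\<And>a b. \<phi> (a + b) = \<phi> a + \<phi> b" using assms by (simp add: additive_def)
  have "\<phi> L = \<phi> (\<Sum>i\<in>UNIV. (L $ i) *s axis i 1)" by (simp add: basis_expansion)
  also have "\<dots> = (\<Sum>i\<in>UNIV. (L $ i) *s \<phi> (axis i 1))"
    by (simp add: addhom_sum[of \<phi>, OF add] additive_smult[OF assms])
  finally show ?thesis .
qed

subsection \<open>group ring\<close>

lemma grp_act_eq:
  assumes "finite A" "Poly_Mapping.keys p \<subseteq> A"
  shows "grp_act \<phi> p = (\<Sum>\<mu>\<in>A. Poly_Mapping.single (\<phi> \<mu>) (Poly_Mapping.lookup p \<mu>))"
  unfolding grp_act_def
  by (rule sum.mono_neutral_left) (use assms in \<open>auto simp: in_keys_iff\<close>)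

lemma grp_act_add: "grp_act \<phi> (p + q) = grp_act \<phi> p + grp_act \<phi> q"
proof -
  let ?A = "Poly_Mapping.keys p \<union> Poly_Mapping.keys q"
  have f: "finite ?A" by simp
  have "Poly_Mapping.keys (p + q) \<subseteq> ?A" by (rule keys_add)
  then show ?thesis
    by (simp add: grp_act_eq[OF f] lookup_add single_add sum.distrib)
qed

lemma grp_act_single: "grp_act \<phi> (Poly_Mapping.single k c) = Poly_Mapping.single (\<phi> k) c"
  by (subst grp_act_eq[of "{k}"]) auto

lemma grp_act_mult:
  assumes "additive \<phi>"
  shows "grp_act \<phi> (p * q) = grp_act \<phi> p * grp_act \<phi> q"
  by (rule addhom_mult) (use assms in \<open>simp_all add: grp_act_add grp_act_single mult_single additive_def\<close>)

lemma grp_act_one: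
  assumes "additive \<phi>"
  shows "grp_act \<phi> 1 = 1"
proof -
  have add: "\<And>a b. \<phi> (a + b) = \<phi> a + \<phi> b" using assms by (simp add: additive_def)
  show ?thesis
    using grp_act_single[of \<phi> 0 1] addhom_zero[of \<phi>, OF add] by simp
qed

lemma single_pow: "(Poly_Mapping.single (a::'n::finite lat) (1::int)) ^ n = Poly_Mapping.single (int n *s a) 1"
  by (induction n) (simp_all add: mult_single vector_sadd_rdistrib add.commute)

lemma x_grp_dvd: "x_grp l dvd (1 - Poly_Mapping.single (k *s l) 1)"
proof -
  let ?g = "Poly_Mapping.single (- l) (1::int)"
  have base: "x_grp l dvd 1 - ?g ^ n" for n
    unfolding x_grp_def one_diff_power_eq by simp
  show ?thesis
  proof (cases "k \<ge> 0")
    case True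
    then obtain n where k: "k = int n" by (metis nonneg_int_cases)
    let ?h = "Poly_Mapping.single l (1::int)"
    have z: "int n *s l + int n *s - l = 0" by (simp add: vec_eq_iff)
    have "?h ^ n * ?g ^ n = 1"
      by (simp only: single_pow mult_single z) simp
    then have "1 - ?h ^ n = - (?h ^ n) * (1 - ?g ^ n)" by (simp add: algebra_simps)
    then have "1 - Poly_Mapping.single (k *s l) 1 = - (?h ^ n) * (1 - ?g ^ n)"
      by (simp add: single_pow k)
    then show ?thesis using base[of n] by simp
  next
    case False
    then obtain n where k: "k = - int n" by (metis nonneg_int_cases neg_0_le_iff_le linear minus_minus)
    have "k *s l = int n *s (- l)" by (simp add: k vec_eq_iff)
    then show ?thesis using base[of n] by (simp add: single_pow)
  qed
qed



lemma grp_diff_dvd: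
  assumes "additive \<phi>" "additive \<psi>" "\<forall>a. lat_mult (\<phi> a - \<psi> a) l"
  shows "x_grp l dvd grp_act \<phi> p - grp_act \<psi> p"
proof (rule addhom_dvd[where F = "\<lambda>p. grp_act \<phi> p - grp_act \<psi> p"])
  fix p q show "grp_act \<phi> (p + q) - grp_act \<psi> (p + q) =
    (grp_act \<phi> p - grp_act \<psi> p) + (grp_act \<phi> q - grp_act \<psi> q)"
    by (simp add: grp_act_add)
next
  fix a c
  obtain k where k: "\<phi> a - \<psi> a = k *s l" using assms(3) unfolding lat_mult_def by blast
  then have e: "\<phi> a = \<psi> a + k *s l" by (simp add: algebra_simps)
  have "grp_act \<phi> (Poly_Mapping.single a c) - grp_act \<psi> (Poly_Mapping.single a c)
     = - (Poly_Mapping.single (\<psi> a) c) * (1 - Poly_Mapping.single (k *s l) 1)"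
    by (simp add: grp_act_single e mult_single algebra_simps flip: mult_single[of "\<psi> a" c "k *s l" 1, simplified])
  then show "x_grp l dvd grp_act \<phi> (Poly_Mapping.single a c) - grp_act \<psi> (Poly_Mapping.single a c)"
    using x_grp_dvd[of l k] by simp
qed

lemma grp_act_x:
  assumes "additive \<phi>"
  shows "grp_act \<phi> (x_grp L) = x_grp (\<phi> L)"
proof -
  have add: "\<And>a b. \<phi> (a + b) = \<phi> a + \<phi> b" using assms by (simp add: additive_def)
  show ?thesis
    unfolding x_grp_def
    by (simp add: addhom_diff[of "grp_act \<phi>", OF grp_act_add] grp_act_one[OF assms] grp_act_single
        addhom_neg[of \<phi>, OF add])
qed

subsection \<open>symmetric algebra\<close>

lemma mon_act_univ:
  "mon_act \<phi> m = (\<Prod>i\<in>UNIV. sym_lin (\<phi> (axis i 1)) ^ Poly_Mapping.lookup m i)"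
  unfolding mon_act_def
  by (rule prod.mono_neutral_left) (auto simp: in_keys_iff)

lemma mon_act_add: "mon_act \<phi> (m1 + m2) = mon_act \<phi> m1 * mon_act \<phi> m2"
  by (simp add: mon_act_univ lookup_add power_add prod.distrib)

lemma mon_act_zero: "mon_act \<phi> 0 = 1"
  by (simp add: mon_act_def)

lemma mon_act_single: "mon_act \<phi> (Poly_Mapping.single i 1) = sym_lin (\<phi> (axis i 1))"
proof -
  have "mon_act \<phi> (Poly_Mapping.single i 1) = (\<Prod>j\<in>UNIV. if i = j then sym_lin (\<phi> (axis j 1)) else 1)"
    unfolding mon_act_univ by (rule prod.cong) (auto simp: lookup_single when_def)
  then show ?thesis by simp
qed

lemma sym_act_eq:
  assumes "finite A" "Poly_Mapping.keys p \<subseteq> A"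
  shows "sym_act \<phi> p = (\<Sum>m\<in>A. Poly_Mapping.single 0 (Poly_Mapping.lookup p m) * mon_act \<phi> m)"
  unfolding sym_act_def
  by (rule sum.mono_neutral_left) (use assms in \<open>auto simp: in_keys_iff\<close>)

lemma sym_act_add: "sym_act \<phi> (p + q) = sym_act \<phi> p + sym_act \<phi> q"
proof -
  let ?A = "Poly_Mapping.keys p \<union> Poly_Mapping.keys q"
  have f: "finite ?A" by simp
  have "Poly_Mapping.keys (p + q) \<subseteq> ?A" by (rule keys_add)
  then show ?thesis
    by (simp add: sym_act_eq[OF f] lookup_add single_add sum.distrib distrib_right)
qed

lemma sym_act_single: "sym_act \<phi> (Poly_Mapping.single k c) = Poly_Mapping.single 0 c * mon_act \<phi> k"
  by (subst sym_act_eq[of "{k}"]) auto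

lemma sym_act_mult: "sym_act \<phi> (p * q) = sym_act \<phi> p * sym_act \<phi> q"
proof (rule addhom_mult)
  fix p q show "sym_act \<phi> (p + q) = sym_act \<phi> p + sym_act \<phi> q" by (rule sym_act_add)
next
  fix a b :: "'a \<Rightarrow>\<^sub>0 nat" and c d :: int
  have "Poly_Mapping.single (0::'a \<Rightarrow>\<^sub>0 nat) (c * d) = Poly_Mapping.single 0 c * Poly_Mapping.single 0 d"
    by (simp add: mult_single)
  then show "sym_act \<phi> (Poly_Mapping.single a c * Poly_Mapping.single b d) =
    sym_act \<phi> (Poly_Mapping.single a c) * sym_act \<phi> (Poly_Mapping.single b d)"
    by (simp add: mult_single sym_act_single mon_act_add algebra_simps)
qed

lemma sym_act_one: "sym_act \<phi> 1 = 1"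
  using sym_act_single[of \<phi> 0 1] by (simp add: mon_act_zero)

lemma sym_lin_add: "sym_lin (a + b) = sym_lin a + sym_lin b"
  by (simp add: sym_lin_def single_add sum.distrib)

lemma sym_lin_smult: "sym_lin (k *s a) = Poly_Mapping.single 0 k * sym_lin a"
  by (simp add: sym_lin_def sum_distrib_left mult_single)

lemma sym_act_lin:
  assumes "additive \<phi>"
  shows "sym_act \<phi> (sym_lin L) = sym_lin (\<phi> L)"
proof -
  have "sym_act \<phi> (sym_lin L) = (\<Sum>i\<in>UNIV. Poly_Mapping.single 0 (L $ i) * sym_lin (\<phi> (axis i 1)))"
    unfolding sym_lin_def[of L]
    by (simp only: addhom_sum[of "sym_act \<phi>", OF sym_act_add] sym_act_single mon_act_single)
  also have "\<dots> = (\<Sum>i\<in>UNIV. sym_lin ((L $ i) *s \<phi> (axis i 1)))"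
    by (simp add: sym_lin_smult)
  also have "\<dots> = sym_lin (\<Sum>i\<in>UNIV. (L $ i) *s \<phi> (axis i 1))"
    by (simp add: addhom_sum[of sym_lin, OF sym_lin_add])
  also have "\<dots> = sym_lin (\<phi> L)" by (simp only: additive_lin[OF assms, of L, symmetric])
  finally show ?thesis .
qed

lemma sym_diff_dvd:
  assumes "additive \<phi>" "additive \<psi>" "\<forall>a. lat_mult (\<phi> a - \<psi> a) l"
  shows "x_sym l dvd sym_act \<phi> p - sym_act \<psi> p"
proof (rule addhom_dvd[where F = "\<lambda>p. sym_act \<phi> p - sym_act \<psi> p"])
  fix p q show "sym_act \<phi> (p + q) - sym_act \<psi> (p + q) =
    (sym_act \<phi> p - sym_act \<psi> p) + (sym_act \<phi> q - sym_act \<psi> q)"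
    by (simp add: sym_act_add)
next
  fix a c
  have "x_sym l dvd mon_act \<phi> a - mon_act \<psi> a"
    unfolding mon_act_univ
  proof (rule dvd_prod_diff)
    fix i
    obtain k where k: "\<phi> (axis i 1) - \<psi> (axis i 1) = k *s l" using assms(3) unfolding lat_mult_def by blast
    have "sym_lin (\<phi> (axis i 1)) - sym_lin (\<psi> (axis i 1)) = sym_lin (\<phi> (axis i 1) - \<psi> (axis i 1))"
      by (rule addhom_diff[of sym_lin, OF sym_lin_add, symmetric])
    also have "\<dots> = Poly_Mapping.single 0 k * x_sym l" by (simp add: k sym_lin_smult x_sym_def)
    finally show "x_sym l dvd sym_lin (\<phi> (axis i 1)) - sym_lin (\<psi> (axis i 1))" by simp
  qed
  then show "x_sym l dvd sym_act \<phi> (Poly_Mapping.single a c) - sym_act \<psi> (Poly_Mapping.single a c)"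
    unfolding sym_act_single right_diff_distrib[symmetric] by (rule dvd_mult)
qed

lemma x_sym_dvd: "x_sym l dvd x_sym (k *s l)"
  unfolding x_sym_def sym_lin_smult by (rule dvd_triv_right)



lemma main_generic:
  fixes act :: "('n::finite lat \<Rightarrow> 'n lat) \<Rightarrow> 's::comm_ring_1 \<Rightarrow> 's" and x :: "'n lat \<Rightarrow> 's"
    and V :: "'v set" and le E :: "('v \<times> 'v) set" and l :: "'v \<times> 'v \<Rightarrow> 'n lat"
    and V' :: "'u set" and le' E' :: "('u \<times> 'u) set" and l' :: "'u \<times> 'u \<Rightarrow> 'n lat"
    and fV :: "'v \<Rightarrow> 'u" and fl :: "'v \<Rightarrow> 'n lat \<Rightarrow> 'n lat"
    and \<xi> :: "'v \<Rightarrow> 'n lat \<Rightarrow> 'n lat"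
  assumes act_add: "\<And>\<phi> p q. additive \<phi> \<Longrightarrow> act \<phi> (p + q) = act \<phi> p + act \<phi> q"
    and act_mult: "\<And>\<phi> p q. additive \<phi> \<Longrightarrow> act \<phi> (p * q) = act \<phi> p * act \<phi> q"
    and act_one: "\<And>\<phi>. additive \<phi> \<Longrightarrow> act \<phi> 1 = 1"
    and diff_dvd: "\<And>\<phi> \<psi> l p. additive \<phi> \<Longrightarrow> additive \<psi> \<Longrightarrow> \<forall>a. lat_mult (\<phi> a - \<psi> a) l
        \<Longrightarrow> x l dvd act \<phi> p - act \<psi> p"
    and act_x: "\<And>\<phi> L. additive \<phi> \<Longrightarrow> act \<phi> (x L) = x (\<phi> L)"
    and x_dvd: "\<And>l k. x l dvd x (k *s l)"
  assumes "moment_graph V le E l"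
    and "mg_morphism V le E l V' le' E' l' fV fl"
    and "monodromy V E l \<xi>"
    and h5: "\<forall>(v, w)\<in>E. fV v \<noteq> fV w \<longrightarrow> lat_mult (\<xi> v (ulab E' l' (fV v) (fV w))) (l (v, w))"
  shows "is_ring_hom_between x V E l V' E' l' (pullback act \<xi> fV V)"
proof -
  have EV: "\<And>v w. (v, w) \<in> E \<Longrightarrow> v \<in> V \<and> w \<in> V"
    using assms(7) unfolding moment_graph_def by blast
  have fVV: "\<And>v. v \<in> V \<Longrightarrow> fV v \<in> V'"
    using assms(8) unfolding mg_morphism_def by blast
  have uedge: "\<And>v w. (v, w) \<in> E \<Longrightarrow> fV v \<noteq> fV w \<Longrightarrow> uedge E' (fV v) (fV w)"
    using assms(8) unfolding mg_morphism_def by blast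
  have addv: "\<And>v. v \<in> V \<Longrightarrow> additive (\<xi> v)"
    using assms(9) unfolding monodromy_def by (blast intro: lat_aut_additive)
  have mono: "\<And>v w. (v, w) \<in> E \<Longrightarrow> \<forall>a. lat_mult (\<xi> v a - \<xi> w a) (l (v, w))"
    using assms(9) unfolding monodromy_def by blast
  have mem: "pullback act \<xi> fV V z \<in> struct_alg x V E l" if z: "z \<in> struct_alg x V' E' l'" for z
  proof -
    have zE: "\<And>u u'. (u, u') \<in> E' \<Longrightarrow> x (l' (u, u')) dvd z u - z u'"
      using z unfolding struct_alg_def by blast
    have "x (l (v, w)) dvd act (\<xi> v) (z (fV v)) - act (\<xi> w) (z (fV w))" if e: "(v, w) \<in> E" for v w
    proof -
      have vw: "v \<in> V" "w \<in> V" using EV[OF e] by auto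
      have base: "x (l (v, w)) dvd act (\<xi> v) p - act (\<xi> w) p" for p
        by (rule diff_dvd[OF addv[OF vw(1)] addv[OF vw(2)] mono[OF e]])
      show ?thesis
      proof (cases "fV v = fV w")
        case True then show ?thesis using base by simp
      next
        case False
        let ?L = "ulab E' l' (fV v) (fV w)"
        have "x ?L dvd z (fV v) - z (fV w)"
        proof (cases "(fV v, fV w) \<in> E'")
          case True then show ?thesis using zE[OF True] by (simp add: ulab_def)
        next
          case False
          then have "(fV w, fV v) \<in> E'" using uedge[OF e \<open>fV v \<noteq> fV w\<close>] by (simp add: uedge_def)
          then have "x ?L dvd z (fV w) - z (fV v)" using zE False by (simp add: ulab_def)
          then show ?thesis by (metis dvd_minus_iff minus_diff_eq)
        qed
        then obtain q where q: "z (fV v) = z (fV w) + x ?L * q"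
          by (metis dvd_def diff_add_cancel add.commute)
        obtain k where k: "\<xi> v ?L = k *s l (v, w)" using h5 e False unfolding lat_mult_def by blast
        have "act (\<xi> v) (z (fV v)) - act (\<xi> w) (z (fV w)) =
           (act (\<xi> v) (z (fV w)) - act (\<xi> w) (z (fV w))) + x (k *s l (v, w)) * act (\<xi> v) q"
          by (simp add: q act_add[OF addv[OF vw(1)]] act_mult[OF addv[OF vw(1)]]
               act_x[OF addv[OF vw(1)]] k)
        moreover have "x (l (v, w)) dvd x (k *s l (v, w)) * act (\<xi> v) q"
          using x_dvd by (rule dvd_mult2)
        ultimately show ?thesis using base by (metis dvd_add)
      qed
    qed
    then show ?thesis unfolding struct_alg_def pullback_def using EV by auto
  qed
  show ?thesis
    unfolding is_ring_hom_between_def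
  proof (intro conjI ballI)
    show "pullback act \<xi> fV V (\<lambda>u. if u \<in> V' then 1 else 0) = (\<lambda>v. if v \<in> V then 1 else 0)"
      by (auto simp: pullback_def fVV act_one addv)
  next
    fix z z' assume "z \<in> struct_alg x V' E' l'" "z' \<in> struct_alg x V' E' l'"
    show "pullback act \<xi> fV V (\<lambda>u. z u + z' u) = (\<lambda>v. pullback act \<xi> fV V z v + pullback act \<xi> fV V z' v)"
      by (auto simp: pullback_def act_add addv)
    show "pullback act \<xi> fV V (\<lambda>u. z u * z' u) = (\<lambda>v. pullback act \<xi> fV V z v * pullback act \<xi> fV V z' v)"
      by (auto simp: pullback_def act_mult addv)
  qed (rule mem)
qed

theorem mainTheorem2:
  fixes V :: "'v set" and le E :: "('v \<times> 'v) set" and l :: "'v \<times> 'v \<Rightarrow> 'n::finite lat"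
    and V' :: "'u set" and le' E' :: "('u \<times> 'u) set" and l' :: "'u \<times> 'u \<Rightarrow> 'n lat"
    and fV :: "'v \<Rightarrow> 'u" and fl :: "'v \<Rightarrow> 'n lat \<Rightarrow> 'n lat"
    and \<xi> :: "'v \<Rightarrow> 'n lat \<Rightarrow> 'n lat"
  assumes "moment_graph V le E l"
    and "moment_graph V' le' E' l'"
    and "mg_morphism V le E l V' le' E' l' fV fl"
    and "monodromy V E l \<xi>"
    and "\<forall>(v, w)\<in>E. fV v \<noteq> fV w \<longrightarrow> lat_mult (\<xi> v (ulab E' l' (fV v) (fV w))) (l (v, w))"
  shows "is_ring_hom_between x_grp V E l V' E' l' (pullback grp_act \<xi> fV V)
       \<and> is_ring_hom_between x_sym V E l V' E' l' (pullback sym_act \<xi> fV V)"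
proof
  show "is_ring_hom_between x_grp V E l V' E' l' (pullback grp_act \<xi> fV V)"
    by (rule main_generic[OF grp_act_add grp_act_mult grp_act_one grp_diff_dvd grp_act_x _
          assms(1) assms(3) assms(4) assms(5)])
       (simp_all add: x_grp_def x_grp_dvd[unfolded x_grp_def] flip: vector_smult_lneg)
next
  show "is_ring_hom_between x_sym V E l V' E' l' (pullback sym_act \<xi> fV V)"
    by (rule main_generic[OF sym_act_add sym_act_mult sym_act_one sym_diff_dvd _ x_sym_dvd
          assms(1) assms(3) assms(4) assms(5)])
       (simp_all add: x_sym_def sym_act_lin)
qed

end
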